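(* The optimal value of problem (D) equals the optimal value of the mixed-integer linear program: minimize $B$ over $B\in\mathbb{N}$ and $\gamma\in\{0,1\}^{\mathcal{C}\times\mathcal{N}}$ subject to $\sum_{g\in\mathcal{N}}\gamma_{c,g}=|\mathcal{N}_c|$ for all $c\in\mathcal{C}$; $\sum_{c\in\mathcal{C}}\gamma_{c,g}=1$ for all $g\in\mathcal{N}$; $B\ge\frac{1}{v_c}\sum_{g\in\mathcal{N}}g\,\gamma_{c,g}$ for all $c\in\mathcal{C}$; and $B\ge N$. Moreover, from any optimal solution $(B,\gamma)$ of this program one can construct a feasible solution of (D) with the same value $B$.
   Context: A ballot style consists of contests $\mathcal{C}=\{1,\ldots,C\}$, candidates $\mathcal{N}=\{1,\ldots,N\}$ (identified with the integers $1,\ldots,N$) partitioned into nonempty sets $\mathcal{N}_c$ ($c\in\mathcal{C}$), and positive integers $v_c$. $\mathscr{B}=\{\beta\subseteq\mathcal{N}: |\mathcal{N}_c\cap\beta|\le v_c\ \forall c\}$. Problem (D): minimize $B$ over $B\in\mathbb{N}$ and $\beta_1,\ldots,\beta_B\in\mathscr{B}$ subject to $|\{b\in\{1,\ldots,B\}: i\in\beta_b\}|\neq|\{b\in\{1,\ldots,B\}: j\in\beta_b\}|$ for all distinct $i,j\in\mathcal{N}$, and $|\{b\in\{1,\ldots,B\}: i\in\beta_b\}|\ge1$ for all $i\in\mathcal{N}$. *)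

theory Defs
  imports Complex_Main
begin

text \<open>Contests are 1..C, candidates 1..N; Ncand c is the candidate set of contest c,
  v c its vote limit.\<close>

definition ballots :: "nat \<Rightarrow> (nat \<Rightarrow> nat set) \<Rightarrow> (nat \<Rightarrow> nat) \<Rightarrow> nat \<Rightarrow> nat set set" where
  "ballots C Ncand v N = {\<beta>. \<beta> \<subseteq> {1..N} \<and> (\<forall>c\<in>{1..C}. card (Ncand c \<inter> \<beta>) \<le> v c)}"

definition occ :: "nat \<Rightarrow> (nat \<Rightarrow> nat set) \<Rightarrow> nat \<Rightarrow> nat" where
  "occ B bs i = card {b \<in> {1..B}. i \<in> bs b}"

definition D_solution :: "nat \<Rightarrow> (nat \<Rightarrow> nat set) \<Rightarrow> (nat \<Rightarrow> nat) \<Rightarrow> nat \<Rightarrow> nat \<Rightarrow> (nat \<Rightarrow> nat set) \<Rightarrow> bool" where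
  "D_solution C Ncand v N B bs \<longleftrightarrow>
     (\<forall>b\<in>{1..B}. bs b \<in> ballots C Ncand v N) \<and>
     (\<forall>i\<in>{1..N}. \<forall>j\<in>{1..N}. i \<noteq> j \<longrightarrow> occ B bs i \<noteq> occ B bs j) \<and>
     (\<forall>i\<in>{1..N}. occ B bs i \<ge> 1)"

definition D_feasible :: "nat \<Rightarrow> (nat \<Rightarrow> nat set) \<Rightarrow> (nat \<Rightarrow> nat) \<Rightarrow> nat \<Rightarrow> nat \<Rightarrow> bool" where
  "D_feasible C Ncand v N B \<longleftrightarrow> (\<exists>bs. D_solution C Ncand v N B bs)"

definition M_solution :: "nat \<Rightarrow> (nat \<Rightarrow> nat set) \<Rightarrow> (nat \<Rightarrow> nat) \<Rightarrow> nat \<Rightarrow> nat \<Rightarrow> (nat \<Rightarrow> nat \<Rightarrow> nat) \<Rightarrow> bool" where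
  "M_solution C Ncand v N B \<gamma> \<longleftrightarrow>
     (\<forall>c\<in>{1..C}. \<forall>g\<in>{1..N}. \<gamma> c g \<in> {0, 1}) \<and>
     (\<forall>c\<in>{1..C}. (\<Sum>g\<in>{1..N}. \<gamma> c g) = card (Ncand c)) \<and>
     (\<forall>g\<in>{1..N}. (\<Sum>c\<in>{1..C}. \<gamma> c g) = 1) \<and>
     (\<forall>c\<in>{1..C}. real B \<ge> (1 / real (v c)) * (\<Sum>g\<in>{1..N}. real g * real (\<gamma> c g))) \<and>
     B \<ge> N"

definition M_feasible :: "nat \<Rightarrow> (nat \<Rightarrow> nat set) \<Rightarrow> (nat \<Rightarrow> nat) \<Rightarrow> nat \<Rightarrow> nat \<Rightarrow> bool" where
  "M_feasible C Ncand v N B \<longleftrightarrow> (\<exists>\<gamma>. M_solution C Ncand v N B \<gamma>)"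

definition M_optimal :: "nat \<Rightarrow> (nat \<Rightarrow> nat set) \<Rightarrow> (nat \<Rightarrow> nat) \<Rightarrow> nat \<Rightarrow> nat \<Rightarrow> (nat \<Rightarrow> nat \<Rightarrow> nat) \<Rightarrow> bool" where
  "M_optimal C Ncand v N B \<gamma> \<longleftrightarrow>
     M_solution C Ncand v N B \<gamma> \<and> (\<forall>B'. M_feasible C Ncand v N B' \<longrightarrow> B \<le> B')"

end

theory Submission
  imports Defs
begin


lemma wrap:
  fixes K :: "nat set" and d :: "nat \<Rightarrow> nat" and B v :: nat
  assumes fin: "finite K" and dle: "\<forall>i\<in>K. d i \<le> B" and tot: "(\<Sum>i\<in>K. d i) \<le> v * B"
  shows "\<exists>A. (\<forall>b. A b \<subseteq> K) \<and> (\<forall>b\<in>{1..B}. card (A b) \<le> v) \<and> (\<forall>i\<in>K. card {b\<in>{1..B}. i \<in> A b} = d i)"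
proof -
  define P where "P i = (\<Sum>j\<in>{j\<in>K. j<i}. d j)" for i
  define A where "A b = {i\<in>K. \<exists>p. P i \<le> p \<and> p < P i + d i \<and> Suc (p mod B) = b}" for b
  have Pd: "P i + d i = (\<Sum>j\<in>{j\<in>K. j\<le>i}. d j)" if "i\<in>K" for i
  proof -
    have "{j\<in>K. j\<le>i} = insert i {j\<in>K. j<i}" using that by auto
    then show ?thesis unfolding P_def using fin by (simp add: add.commute)
  qed
  have disj: "P i + d i \<le> P j" if "i\<in>K" "j\<in>K" "i<j" for i j
  proof -
    have "(\<Sum>j\<in>{j\<in>K. j\<le>i}. d j) \<le> P j" unfolding P_def
      by (rule sum_mono2) (use fin that in auto)
    then show ?thesis using Pd[OF that(1)] by simp
  qed
  have bound: "P i + d i \<le> (\<Sum>i\<in>K. d i)" if "i\<in>K" for i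
    unfolding Pd[OF that] by (rule sum_mono2) (use fin in auto)
  have inj_mod: "inj_on (\<lambda>p. Suc (p mod B)) {P i..<P i + d i}" if "i\<in>K" for i
  proof (rule inj_onI)
    fix p q assume p: "p \<in> {P i..<P i + d i}" and q: "q \<in> {P i..<P i + d i}"
      and e: "Suc (p mod B) = Suc (q mod B)"
    have "d i \<le> B" using dle that by auto
    show "p = q"
    proof (rule ccontr)
      assume "p \<noteq> q"
      then consider "p < q" | "q < p" by linarith
      then show False
      proof cases
        case 1
        have "B dvd q - p" using e 1 mod_eq_dvd_iff_nat[of p q B] by simp
        then have "(q - p) mod B = 0" by simp
        moreover have "0 < q - p" "q - p < B" using 1 p q \<open>d i \<le> B\<close> by auto
        ultimately show False by simp
      next
        case 2
        have "B dvd p - q" using e 2 mod_eq_dvd_iff_nat[of q p B] by simp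
        then have "(p - q) mod B = 0" by simp
        moreover have "0 < p - q" "p - q < B" using 2 p q \<open>d i \<le> B\<close> by auto
        ultimately show False by simp
      qed
    qed
  qed
  have cnt: "{b\<in>{1..B}. i\<in>A b} = (\<lambda>p. Suc (p mod B)) ` {P i..<P i + d i}" if "i\<in>K" for i
  proof
    show "{b\<in>{1..B}. i\<in>A b} \<subseteq> (\<lambda>p. Suc (p mod B)) ` {P i..<P i + d i}"
      unfolding A_def by auto
    show "(\<lambda>p. Suc (p mod B)) ` {P i..<P i + d i} \<subseteq> {b\<in>{1..B}. i\<in>A b}"
    proof
      fix b assume "b \<in> (\<lambda>p. Suc (p mod B)) ` {P i..<P i + d i}"
      then obtain p where p: "p \<in> {P i..<P i + d i}" "b = Suc (p mod B)" by auto
      have "0 < B" using p dle that by fastforce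
      then have "b \<in> {1..B}" using p by (simp add: Suc_leI)
      moreover have "i \<in> A b" unfolding A_def using that p by auto
      ultimately show "b \<in> {b\<in>{1..B}. i\<in>A b}" by simp
    qed
  qed
  have c1: "card {b\<in>{1..B}. i \<in> A b} = d i" if "i\<in>K" for i
    using cnt[OF that] card_image[OF inj_mod[OF that]] by simp
  have c2: "card (A b) \<le> v" if b: "b\<in>{1..B}" for b
  proof -
    define pos where "pos i = (SOME p. P i \<le> p \<and> p < P i + d i \<and> Suc (p mod B) = b)" for i
    have posp: "P i \<le> pos i \<and> pos i < P i + d i \<and> Suc (pos i mod B) = b" if "i \<in> A b" for i
      unfolding pos_def by (rule someI_ex) (use that A_def in auto)
    have Bpos: "0 < B" using b by auto
    have "inj_on (\<lambda>i. pos i div B) (A b)"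
    proof (rule inj_onI)
      fix i j assume i: "i \<in> A b" and j: "j \<in> A b" and e: "pos i div B = pos j div B"
      have "pos i mod B = pos j mod B" using posp[OF i] posp[OF j] by simp
      then have pe: "pos i = pos j" using e by (metis div_mult_mod_eq)
      have iK: "i \<in> K" and jK: "j \<in> K" using i j A_def by auto
      show "i = j"
      proof (rule ccontr)
        assume "i \<noteq> j"
        then consider "i < j" | "j < i" by linarith
        then show False
        proof cases
          case 1 then show False using disj[OF iK jK 1] posp[OF i] posp[OF j] pe by linarith
        next
          case 2 then show False using disj[OF jK iK 2] posp[OF i] posp[OF j] pe by linarith
        qed
      qed
    qed
    moreover have "(\<lambda>i. pos i div B) ` A b \<subseteq> {..<v}"
    proof
      fix x assume "x \<in> (\<lambda>i. pos i div B) ` A b"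
      then obtain i where i: "i \<in> A b" "x = pos i div B" by auto
      have "i \<in> K" using i A_def by auto
      then have "pos i < v * B" using posp[OF i(1)] bound tot by (meson leD le_trans not_le_imp_less)
      then show "x \<in> {..<v}" using i less_mult_imp_div_less by auto
    qed
    ultimately have "card (A b) \<le> card {..<v}" by (rule card_inj_on_le) simp
    then show ?thesis by simp
  qed
  have "\<forall>b. A b \<subseteq> K" unfolding A_def by auto
  then show ?thesis using c1 c2 by blast
qed


lemma sum_if_card: "finite A \<Longrightarrow> (\<Sum>x\<in>A. if P x then 1 else 0::nat) = card {x\<in>A. P x}"
  by (simp add: sum.inter_filter[symmetric])
lemma sum01: assumes "finite A" "\<forall>x\<in>A. f x \<in> {0,1::nat}" shows "sum f A = card {x\<in>A. f x = 1}"
proof -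
  have "sum f A = (\<Sum>x\<in>A. if f x = 1 then 1 else 0)" using assms(2) by (intro sum.cong) auto
  then show ?thesis using sum_if_card[OF assms(1)] by simp
qed
lemma sum01w: assumes "finite A" "\<forall>x\<in>A. f x \<in> {0,1::nat}" shows "(\<Sum>x\<in>A. x * f x) = sum (\<lambda>x. x) {x\<in>A. f x = 1}"
proof -
  have "(\<Sum>x\<in>A. x * f x) = (\<Sum>x\<in>A. if f x = 1 then x else 0)" using assms(2) by (intro sum.cong) auto
  then show ?thesis using sum.inter_filter[OF assms(1), of "\<lambda>x. x"] by simp
qed


lemma D_to_M:
  fixes C N :: nat and Ncand :: "nat \<Rightarrow> nat set" and v :: "nat \<Rightarrow> nat"
  assumes part_cover: "(\<Union>c\<in>{1..C}. Ncand c) = {1..N}"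
    and part_disj: "\<forall>c\<in>{1..C}. \<forall>c'\<in>{1..C}. c \<noteq> c' \<longrightarrow> Ncand c \<inter> Ncand c' = {}"
    and v_pos: "\<forall>c\<in>{1..C}. v c > 0"
    and sol: "D_solution C Ncand v N B bs"
  shows "M_feasible C Ncand v N B"
proof -
  define oc where "oc i = occ B bs i" for i
  have bal: "\<forall>b\<in>{1..B}. bs b \<in> ballots C Ncand v N"
    and dist: "\<forall>i\<in>{1..N}. \<forall>j\<in>{1..N}. i \<noteq> j \<longrightarrow> oc i \<noteq> oc j"
    and pos: "\<forall>i\<in>{1..N}. oc i \<ge> 1" using sol unfolding D_solution_def oc_def by auto
  have injo: "inj_on oc {1..N}" using dist by (meson inj_onI)
  have ole: "oc i \<le> B" for i
  proof -
    have "oc i \<le> card {1..B}" unfolding oc_def occ_def by (rule card_mono) auto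
    then show ?thesis by simp
  qed
  have NB: "N \<le> B"
  proof -
    have "card {1..N} \<le> card {1..B}"
      by (rule card_inj_on_le[OF injo]) (use ole pos in auto)
    then show ?thesis by simp
  qed
  define r where "r i = card {j\<in>{1..N}. oc j \<le> oc i}" for i
  have rle: "r i \<le> oc i" if "i \<in> {1..N}" for i
  proof -
    have "r i \<le> card {1..oc i}" unfolding r_def
      by (rule card_inj_on_le[of oc]) (use injo pos in \<open>auto intro: inj_on_subset\<close>)
    then show ?thesis by simp
  qed
  have rin: "r i \<in> {1..N}" if "i \<in> {1..N}" for i
  proof -
    have "r i \<le> card {1..N}" unfolding r_def by (rule card_mono) auto
    moreover have "0 < r i" unfolding r_def using that by (subst card_gt_0_iff) auto
    ultimately show ?thesis by simp
  qed
  have rmono: "r i < r j" if "i \<in> {1..N}" "j \<in> {1..N}" "oc i < oc j" for i j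
  proof -
    have "{k\<in>{1..N}. oc k \<le> oc i} \<subset> {k\<in>{1..N}. oc k \<le> oc j}"
    proof
      show "{k\<in>{1..N}. oc k \<le> oc i} \<subseteq> {k\<in>{1..N}. oc k \<le> oc j}" using that by auto
      have "j \<in> {k\<in>{1..N}. oc k \<le> oc j}" "j \<notin> {k\<in>{1..N}. oc k \<le> oc i}" using that by auto
      then show "{k\<in>{1..N}. oc k \<le> oc i} \<noteq> {k\<in>{1..N}. oc k \<le> oc j}" by blast
    qed
    then show ?thesis unfolding r_def by (rule psubset_card_mono[rotated]) simp
  qed
  have injr: "inj_on r {1..N}"
  proof (rule inj_onI)
    fix i j assume i: "i \<in> {1..N}" and j: "j \<in> {1..N}" and e: "r i = r j"
    show "i = j"
    proof (rule ccontr)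
      assume "i \<noteq> j"
      then have "oc i \<noteq> oc j" using dist i j by auto
      then have "oc i < oc j \<or> oc j < oc i" by linarith
      then show False using rmono[OF i j] rmono[OF j i] e by auto
    qed
  qed
  have rsurj: "r ` {1..N} = {1..N}"
    by (rule endo_inj_surj) (use rin injr in auto)
  have Nsub: "Ncand c \<subseteq> {1..N}" if "c \<in> {1..C}" for c using part_cover that by blast
  define \<gamma> where "\<gamma> c g = (if g \<in> r ` Ncand c then 1 else 0::nat)" for c g
  have g01: "\<forall>c\<in>{1..C}. \<forall>g\<in>{1..N}. \<gamma> c g \<in> {0, 1}" unfolding \<gamma>_def by auto
  have row: "(\<Sum>g\<in>{1..N}. \<gamma> c g) = card (Ncand c)" if c: "c \<in> {1..C}" for c
  proof -
    have "(\<Sum>g\<in>{1..N}. \<gamma> c g) = card {g\<in>{1..N}. g \<in> r ` Ncand c}"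
      unfolding \<gamma>_def by (rule sum_if_card) simp
    also have "{g\<in>{1..N}. g \<in> r ` Ncand c} = r ` Ncand c" using rin Nsub[OF c] by auto
    also have "card (r ` Ncand c) = card (Ncand c)"
      by (rule card_image) (rule inj_on_subset[OF injr Nsub[OF c]])
    finally show ?thesis .
  qed
  have col: "(\<Sum>c\<in>{1..C}. \<gamma> c g) = 1" if g: "g \<in> {1..N}" for g
  proof -
    obtain i where i: "i \<in> {1..N}" "r i = g" using rsurj g by (metis imageE)
    obtain c0 where c0: "c0 \<in> {1..C}" "i \<in> Ncand c0" using part_cover i(1) by blast
    have "{c\<in>{1..C}. g \<in> r ` Ncand c} = {c0}"
    proof safe
      fix c j assume c: "c \<in> {1..C}" and j: "j \<in> Ncand c" and gj: "g = r j"
      have "j \<in> {1..N}" using Nsub[OF c] j by auto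
      then have "j = i" using injr i gj by (auto dest: inj_onD)
      then show "c = c0" using part_disj c c0 j by blast
    qed (use c0 i in auto)
    then have "(\<Sum>c\<in>{1..C}. \<gamma> c g) = card {c0}"
      unfolding \<gamma>_def using sum_if_card[of "{1..C}" "\<lambda>c. g \<in> r ` Ncand c"] by simp
    then show ?thesis by simp
  qed
  have wt: "real B \<ge> (1 / real (v c)) * (\<Sum>g\<in>{1..N}. real g * real (\<gamma> c g))" if c: "c \<in> {1..C}" for c
  proof -
    have "(\<Sum>g\<in>{1..N}. g * \<gamma> c g) = sum (\<lambda>x. x) {g\<in>{1..N}. \<gamma> c g = 1}"
      by (rule sum01w) (use g01 c in auto)
    also have "{g\<in>{1..N}. \<gamma> c g = 1} = r ` Ncand c" unfolding \<gamma>_def using rin Nsub[OF c] by auto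
    also have "sum (\<lambda>x. x) (r ` Ncand c) = (\<Sum>i\<in>Ncand c. r i)"
      by (rule sum.reindex[OF inj_on_subset[OF injr Nsub[OF c]], unfolded comp_def])
    also have "\<dots> \<le> (\<Sum>i\<in>Ncand c. oc i)" by (rule sum_mono) (use rle Nsub[OF c] in auto)
    also have "(\<Sum>i\<in>Ncand c. oc i) = (\<Sum>i\<in>Ncand c. \<Sum>b\<in>{1..B}. if i \<in> bs b then 1 else 0)"
      unfolding oc_def occ_def by (intro sum.cong refl sum_if_card[symmetric]) simp
    also have "\<dots> = (\<Sum>b\<in>{1..B}. \<Sum>i\<in>Ncand c. if i \<in> bs b then 1 else 0)" by (rule sum.swap)
    also have "\<dots> = (\<Sum>b\<in>{1..B}. card (Ncand c \<inter> bs b))"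
    proof (intro sum.cong refl)
      fix b
      have fin: "finite (Ncand c)" using Nsub[OF c] finite_subset by blast
      have "(\<Sum>i\<in>Ncand c. if i \<in> bs b then 1 else 0) = card {i\<in>Ncand c. i \<in> bs b}"
        by (rule sum_if_card[OF fin])
      also have "{i\<in>Ncand c. i \<in> bs b} = Ncand c \<inter> bs b" by auto
      finally show "(\<Sum>i\<in>Ncand c. if i \<in> bs b then 1 else 0) = card (Ncand c \<inter> bs b)" .
    qed
    also have "\<dots> \<le> (\<Sum>b\<in>{1..B}. v c)"
      by (rule sum_mono) (use bal c in \<open>auto simp: ballots_def\<close>)
    also have "\<dots> = v c * B" by simp
    finally have le: "(\<Sum>g\<in>{1..N}. g * \<gamma> c g) \<le> v c * B" .
    have "(\<Sum>g\<in>{1..N}. real g * real (\<gamma> c g)) = real (\<Sum>g\<in>{1..N}. g * \<gamma> c g)" by simp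
    also have "\<dots> \<le> real (v c) * real B" using le by (metis of_nat_le_iff of_nat_mult)
    finally have "(\<Sum>g\<in>{1..N}. real g * real (\<gamma> c g)) \<le> real (v c) * real B" .
    moreover have "real (v c) > 0" using v_pos c by auto
    ultimately show ?thesis by (simp add: field_simps)
  qed
  have "M_solution C Ncand v N B \<gamma>" unfolding M_solution_def using g01 row col wt NB by blast
  then show ?thesis unfolding M_feasible_def by blast
qed


lemma M_to_D:
  fixes C N :: nat and Ncand :: "nat \<Rightarrow> nat set" and v :: "nat \<Rightarrow> nat"
  assumes part_cover: "(\<Union>c\<in>{1..C}. Ncand c) = {1..N}"
    and part_disj: "\<forall>c\<in>{1..C}. \<forall>c'\<in>{1..C}. c \<noteq> c' \<longrightarrow> Ncand c \<inter> Ncand c' = {}"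
    and v_pos: "\<forall>c\<in>{1..C}. v c > 0"
    and sol: "M_solution C Ncand v N B \<gamma>"
  shows "\<exists>bs. D_solution C Ncand v N B bs"
proof -
  have g01: "\<forall>c\<in>{1..C}. \<forall>g\<in>{1..N}. \<gamma> c g \<in> {0, 1}"
    and row: "\<forall>c\<in>{1..C}. (\<Sum>g\<in>{1..N}. \<gamma> c g) = card (Ncand c)"
    and col: "\<forall>g\<in>{1..N}. (\<Sum>c\<in>{1..C}. \<gamma> c g) = 1"
    and wt: "\<forall>c\<in>{1..C}. real B \<ge> (1 / real (v c)) * (\<Sum>g\<in>{1..N}. real g * real (\<gamma> c g))"
    and NB: "B \<ge> N" using sol unfolding M_solution_def by auto
  have Nsub: "Ncand c \<subseteq> {1..N}" if "c \<in> {1..C}" for c using part_cover that by blast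
  have finN: "finite (Ncand c)" if "c \<in> {1..C}" for c using Nsub[OF that] finite_subset by blast
  define G where "G c = {g\<in>{1..N}. \<gamma> c g = 1}" for c
  have cardG: "card (G c) = card (Ncand c)" if c: "c \<in> {1..C}" for c
  proof -
    have "sum (\<gamma> c) {1..N} = card (G c)" unfolding G_def by (rule sum01) (use g01 c in auto)
    then show ?thesis using row c by simp
  qed
  have "\<forall>c\<in>{1..C}. \<exists>h. bij_betw h (Ncand c) (G c)"
  proof
    fix c assume c: "c \<in> {1..C}"
    have "finite (G c)" unfolding G_def by simp
    then show "\<exists>h. bij_betw h (Ncand c) (G c)" by (rule finite_same_card_bij[OF finN[OF c] _ cardG[OF c, symmetric]])
  qed
  from bchoice[OF this] obtain H where H: "\<forall>c\<in>{1..C}. bij_betw (H c) (Ncand c) (G c)" by blast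
  have colx: "c = c'" if "c \<in> {1..C}" "c' \<in> {1..C}" "g \<in> G c" "g \<in> G c'" for c c' g
  proof (rule ccontr)
    assume ne: "c \<noteq> c'"
    have g: "g \<in> {1..N}" using that(3) unfolding G_def by blast
    have "\<gamma> c g + \<gamma> c' g = (\<Sum>x\<in>{c,c'}. \<gamma> x g)" using ne by simp
    also have "\<dots> \<le> (\<Sum>x\<in>{1..C}. \<gamma> x g)" by (rule sum_mono2) (use that in auto)
    finally have "\<gamma> c g + \<gamma> c' g \<le> (\<Sum>x\<in>{1..C}. \<gamma> x g)" .
    moreover have "\<gamma> c g = 1" "\<gamma> c' g = 1" using that(3,4) unfolding G_def by auto
    ultimately show False using col g by simp
  qed
  define ct where "ct i = (SOME c. c \<in> {1..C} \<and> i \<in> Ncand c)" for i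
  have ct: "ct i = c" if "c \<in> {1..C}" "i \<in> Ncand c" for i c
  proof -
    have "ct i \<in> {1..C} \<and> i \<in> Ncand (ct i)" unfolding ct_def by (rule someI) (use that in blast)
    then show ?thesis using part_disj that by blast
  qed
  define f where "f i = H (ct i) i" for i
  have fG: "f i \<in> G c" if "c \<in> {1..C}" "i \<in> Ncand c" for i c
  proof -
    have "H c i \<in> G c" using H that(1) that(2) by (meson bij_betwE)
    then show ?thesis unfolding f_def using ct[OF that] by simp
  qed
  have injf: "inj_on f {1..N}"
  proof (rule inj_onI)
    fix i j assume i: "i \<in> {1..N}" and j: "j \<in> {1..N}" and e: "f i = f j"
    obtain ci where ci: "ci \<in> {1..C}" "i \<in> Ncand ci" using part_cover i by blast
    obtain cj where cj: "cj \<in> {1..C}" "j \<in> Ncand cj" using part_cover j by blast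
    have "ci = cj" using colx[OF ci(1) cj(1)] fG[OF ci] fG[OF cj] e by metis
    then have "H ci i = H ci j" using e ct[OF ci] ct[OF cj] unfolding f_def by simp
    moreover have "inj_on (H ci) (Ncand ci)" using H ci(1) by (simp add: bij_betw_def)
    ultimately show "i = j" using ci cj \<open>ci = cj\<close> by (auto dest: inj_onD)
  qed
  have fr: "f i \<in> {1..N}" if "c \<in> {1..C}" "i \<in> Ncand c" for i c using fG[OF that] G_def by auto
  have "\<forall>c\<in>{1..C}. \<exists>A. (\<forall>b. A b \<subseteq> Ncand c) \<and> (\<forall>b\<in>{1..B}. card (A b) \<le> v c) \<and>
          (\<forall>i\<in>Ncand c. card {b\<in>{1..B}. i \<in> A b} = f i)"
  proof
    fix c assume c: "c \<in> {1..C}"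
    have tot: "(\<Sum>i\<in>Ncand c. f i) \<le> v c * B"
    proof -
      have "(\<Sum>i\<in>Ncand c. f i) = (\<Sum>i\<in>Ncand c. H c i)" using ct c unfolding f_def by simp
      also have "\<dots> = sum (\<lambda>x. x) (G c)"
        using sum.reindex_bij_betw[OF H[rule_format, OF c], of "\<lambda>x. x"] by simp
      also have "\<dots> = (\<Sum>g\<in>{1..N}. g * \<gamma> c g)" unfolding G_def
        by (rule sum01w[symmetric]) (use g01 c in auto)
      finally have e: "(\<Sum>i\<in>Ncand c. f i) = (\<Sum>g\<in>{1..N}. g * \<gamma> c g)" .
      have s1: "(\<Sum>g\<in>{1..N}. real g * real (\<gamma> c g)) = real (\<Sum>g\<in>{1..N}. g * \<gamma> c g)" by simp
      have vp: "real (v c) > 0" using v_pos c by auto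
      have w: "(1 / real (v c)) * (\<Sum>g\<in>{1..N}. real g * real (\<gamma> c g)) \<le> real B" using wt c by blast
      have "real (\<Sum>g\<in>{1..N}. g * \<gamma> c g) \<le> real (v c) * real B"
        using w vp unfolding s1 by (simp add: field_simps)
      then have "(\<Sum>g\<in>{1..N}. g * \<gamma> c g) \<le> v c * B" by (metis of_nat_le_iff of_nat_mult)
      then show ?thesis using e by simp
    qed
    have dle: "\<forall>i\<in>Ncand c. f i \<le> B" using fr c NB by fastforce
    show "\<exists>A. (\<forall>b. A b \<subseteq> Ncand c) \<and> (\<forall>b\<in>{1..B}. card (A b) \<le> v c) \<and>
          (\<forall>i\<in>Ncand c. card {b\<in>{1..B}. i \<in> A b} = f i)"
      by (rule wrap[OF finN[OF c] dle tot])
  qed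
  from bchoice[OF this] obtain A where A: "\<forall>c\<in>{1..C}. (\<forall>b. A c b \<subseteq> Ncand c) \<and> (\<forall>b\<in>{1..B}. card (A c b) \<le> v c) \<and>
          (\<forall>i\<in>Ncand c. card {b\<in>{1..B}. i \<in> A c b} = f i)" by blast
  define bs where "bs b = (\<Union>c\<in>{1..C}. A c b)" for b
  have inter: "Ncand c \<inter> bs b = A c b" if c: "c \<in> {1..C}" for c b
  proof
    show "Ncand c \<inter> bs b \<subseteq> A c b"
    proof
      fix i assume "i \<in> Ncand c \<inter> bs b"
      then obtain c' where c': "c' \<in> {1..C}" "i \<in> A c' b" "i \<in> Ncand c" unfolding bs_def by auto
      moreover have "A c' b \<subseteq> Ncand c'" using A c'(1) by blast
      ultimately have "i \<in> Ncand c'" by blast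
      then have "c' = c" using part_disj c c' by blast
      then show "i \<in> A c b" using c' by simp
    qed
    have "A c b \<subseteq> Ncand c" using A c by blast
    then show "A c b \<subseteq> Ncand c \<inter> bs b" using c unfolding bs_def by blast
  qed
  have occf: "occ B bs i = f i" if "c \<in> {1..C}" "i \<in> Ncand c" for c i
  proof -
    have "{b\<in>{1..B}. i \<in> bs b} = {b\<in>{1..B}. i \<in> A c b}" using inter[OF that(1)] that(2) by blast
    moreover have "card {b\<in>{1..B}. i \<in> A c b} = f i" using A that by blast
    ultimately show ?thesis unfolding occ_def by simp
  qed
  have "D_solution C Ncand v N B bs"
    unfolding D_solution_def
  proof (intro conjI ballI impI)
    fix b assume b: "b \<in> {1..B}"
    have "A c b \<subseteq> {1..N}" if "c \<in> {1..C}" for c using A Nsub[OF that] that by blast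
    then have "bs b \<subseteq> {1..N}" unfolding bs_def by blast
    moreover have "card (Ncand c \<inter> bs b) \<le> v c" if "c \<in> {1..C}" for c
    proof -
      have "card (A c b) \<le> v c" using A that b by blast
      then show ?thesis using inter[OF that] by simp
    qed
    ultimately show "bs b \<in> ballots C Ncand v N" unfolding ballots_def by blast
  next
    fix i j assume i: "i \<in> {1..N}" and j: "j \<in> {1..N}" and ne: "i \<noteq> j"
    obtain ci where ci: "ci \<in> {1..C}" "i \<in> Ncand ci" using part_cover i by blast
    obtain cj where cj: "cj \<in> {1..C}" "j \<in> Ncand cj" using part_cover j by blast
    show "occ B bs i \<noteq> occ B bs j" using occf[OF ci] occf[OF cj] injf i j ne by (auto dest: inj_onD)
  next
    fix i assume i: "i \<in> {1..N}"
    obtain ci where ci: "ci \<in> {1..C}" "i \<in> Ncand ci" using part_cover i by blast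
    show "1 \<le> occ B bs i" using occf[OF ci] fr[OF ci] by simp
  qed
  then show ?thesis by blast
qed

theorem proposition5:
  fixes C N :: nat and Ncand :: "nat \<Rightarrow> nat set" and v :: "nat \<Rightarrow> nat"
  assumes part_cover: "(\<Union>c\<in>{1..C}. Ncand c) = {1..N}"
    and part_disj: "\<forall>c\<in>{1..C}. \<forall>c'\<in>{1..C}. c \<noteq> c' \<longrightarrow> Ncand c \<inter> Ncand c' = {}"
    and part_ne: "\<forall>c\<in>{1..C}. Ncand c \<noteq> {}"
    and v_pos: "\<forall>c\<in>{1..C}. v c > 0"
  shows "(\<exists>opt. D_feasible C Ncand v N opt \<and> (\<forall>B. D_feasible C Ncand v N B \<longrightarrow> opt \<le> B) \<and>
                M_feasible C Ncand v N opt \<and> (\<forall>B. M_feasible C Ncand v N B \<longrightarrow> opt \<le> B))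
         \<and> (\<forall>B \<gamma>. M_optimal C Ncand v N B \<gamma> \<longrightarrow> (\<exists>bs. D_solution C Ncand v N B bs))"
proof -
  have MD: "\<exists>bs. D_solution C Ncand v N B bs" if "M_solution C Ncand v N B \<gamma>" for B \<gamma>
    by (rule M_to_D[OF part_cover part_disj v_pos that])
  have eqv: "D_feasible C Ncand v N B \<longleftrightarrow> M_feasible C Ncand v N B" for B
    using MD D_to_M[OF part_cover part_disj v_pos] unfolding D_feasible_def M_feasible_def by blast
  have Nsub: "Ncand c \<subseteq> {1..N}" if "c \<in> {1..C}" for c using part_cover that by blast
  define \<gamma> where "\<gamma> c g = (if g \<in> Ncand c then 1 else 0::nat)" for c g
  have "M_solution C Ncand v N (N * N) \<gamma>"
    unfolding M_solution_def
  proof (intro conjI ballI)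
    fix c assume c: "c \<in> {1..C}"
    show "(\<Sum>g\<in>{1..N}. \<gamma> c g) = card (Ncand c)"
    proof -
      have "(\<Sum>g\<in>{1..N}. \<gamma> c g) = card {g\<in>{1..N}. g \<in> Ncand c}"
        unfolding \<gamma>_def by (rule sum_if_card) simp
      also have "{g\<in>{1..N}. g \<in> Ncand c} = Ncand c" using Nsub[OF c] by blast
      finally show ?thesis .
    qed
    have "(\<Sum>g\<in>{1..N}. real g * real (\<gamma> c g)) \<le> (\<Sum>g\<in>{1..N}. real N)"
      by (rule sum_mono) (auto simp: \<gamma>_def)
    also have "\<dots> = real N * real N" by simp
    also have "\<dots> \<le> real (v c) * (real N * real N)"
    proof -
      have "1 \<le> real (v c)" using v_pos c by (simp add: Suc_leI)
      then show ?thesis by (simp add: mult_le_cancel_right1)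
    qed
    finally have le: "(\<Sum>g\<in>{1..N}. real g * real (\<gamma> c g)) \<le> real (v c) * (real N * real N)" .
    have vp: "real (v c) > 0" using v_pos c by auto
    show "(1 / real (v c)) * (\<Sum>g\<in>{1..N}. real g * real (\<gamma> c g)) \<le> real (N * N)"
      using le vp by (simp add: field_simps)
  next
    fix g assume g: "g \<in> {1..N}"
    obtain c0 where c0: "c0 \<in> {1..C}" "g \<in> Ncand c0" using part_cover g by blast
    have "{c\<in>{1..C}. g \<in> Ncand c} = {c0}" using c0 part_disj by blast
    moreover have "(\<Sum>c\<in>{1..C}. \<gamma> c g) = card {c\<in>{1..C}. g \<in> Ncand c}"
      unfolding \<gamma>_def by (rule sum_if_card) simp
    ultimately show "(\<Sum>c\<in>{1..C}. \<gamma> c g) = 1" by simp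
  next
    show "N \<le> N * N" by (cases N) auto
  qed (auto simp: \<gamma>_def)
  then have ex: "M_feasible C Ncand v N (N * N)" unfolding M_feasible_def by blast
  define opt where "opt = (LEAST B. M_feasible C Ncand v N B)"
  have o1: "M_feasible C Ncand v N opt" unfolding opt_def by (rule LeastI[of "\<lambda>B. M_feasible C Ncand v N B", OF ex])
  have o2: "opt \<le> B" if "M_feasible C Ncand v N B" for B unfolding opt_def by (rule Least_le[of "\<lambda>B. M_feasible C Ncand v N B", OF that])
  show ?thesis
  proof (intro conjI allI impI)
    show "\<exists>opt. D_feasible C Ncand v N opt \<and> (\<forall>B. D_feasible C Ncand v N B \<longrightarrow> opt \<le> B) \<and>
                M_feasible C Ncand v N opt \<and> (\<forall>B. M_feasible C Ncand v N B \<longrightarrow> opt \<le> B)"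
      using o1 o2 eqv by blast
  next
    fix B \<gamma> assume "M_optimal C Ncand v N B \<gamma>"
    then show "\<exists>bs. D_solution C Ncand v N B bs" using MD unfolding M_optimal_def by blast
  qed
qed

end
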